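(* Let $\Sigma$ be a finite predictive theory and $A \Rightarrow B$ a predictive formula. Then the procedure PseudoLinClosure executed with arguments $\Sigma$, $A$ and $\mathit{Max} = u(B)$ terminates after finitely many steps, and for its returned value $M$ we have $\Sigma \vdash A \Rightarrow B$ if and only if $B \subseteq M$.
   Context: $Y$ is a non-empty finite set of attributes and $\mathcal{T}_Y = \{y^i \mid y \in Y, i \in \mathbb{Z}\}$; $M + j = \{y^{i+j} \mid y^i \in M\}$. A formula is $A \Rightarrow B$ with $A,B$ finite subsets of $\mathcal{T}_Y$; a theory is a set of formulas. For finite non-empty $M$, $l(M) = \min\{i \mid y^i \in M\}$, $u(M) = \max\{i \mid y^i \in M\}$. $A \Rightarrow B$ is predictive if $A,B \neq \emptyset$ and $i \le j$ for all $x^i \in A$, $y^j \in B$; a theory is predictive if all its formulas are. Deduction rules (for finite $A,B,C,D$, $i \in \mathbb{Z}$): (Ax) infer $A \cup B \Rightarrow A$; (Cut) from $A \Rightarrow B$ and $B \cup C \Rightarrow D$ infer $A \cup C \Rightarrow D$; (Shf) from $A \Rightarrow B$ infer $A+i \Rightarrow B+i$; $\Sigma \vdash A \Rightarrow B$ means a finite sequence ending with $A \Rightarrow B$ exists whose members are in $\Sigma$ or follow from earlier members by these rules. Procedure PseudoLinClosure$(\Sigma, A, \mathit{Max})$: for every $E \Rightarrow F \in \Sigma$ and every integer $i$ with $l(A)-l(E) \le i \le \mathit{Max}-l(F)$, set $\mathit{count}[E \Rightarrow F, i] := |E|$ and, for every $y^j \in E$, add the pair $\langle E \Rightarrow F,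 i\rangle$ to the list $\mathit{list}[y^{i+j}]$ (all lists initially empty). Set $M := A$ and $\mathit{update} := A$. While $\mathit{update} \neq \emptyset$: choose $y^i \in \mathit{update}$, remove it from $\mathit{update}$, and for every $\langle E \Rightarrow F, j\rangle \in \mathit{list}[y^i]$ decrement $\mathit{count}[E \Rightarrow F, j]$ by one; if it becomes $0$, put $\mathit{new} := (F+j) \setminus M$, $M := M \cup \mathit{new}$, $\mathit{update} := \mathit{update} \cup \mathit{new}$. Finally return $M$. *)

theory Defs
  imports Main
begin

text \<open>Attributes: a finite (hence non-empty) type 'a playing the role of Y.
  Temporal attributes y^i are pairs (y, i).\<close>

type_synonym 'a tattr = "'a \<times> int"
type_synonym 'a fml = "'a tattr set \<times> 'a tattr set"

definition shift :: "'a tattr set \<Rightarrow> int \<Rightarrow> 'a tattr set" where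
  "shift M j = (\<lambda>(y, i). (y, i + j)) ` M"

definition lo :: "'a tattr set \<Rightarrow> int" where
  "lo M = Min (snd ` M)"

definition up :: "'a tattr set \<Rightarrow> int" where
  "up M = Max (snd ` M)"

definition is_formula :: "('a::finite) fml \<Rightarrow> bool" where
  "is_formula f \<longleftrightarrow> finite (fst f) \<and> finite (snd f)"

definition predictive :: "('a::finite) fml \<Rightarrow> bool" where
  "predictive f \<longleftrightarrow> is_formula f \<and> fst f \<noteq> {} \<and> snd f \<noteq> {} \<and>
     (\<forall>x i y j. (x, i) \<in> fst f \<longrightarrow> (y, j) \<in> snd f \<longrightarrow> i \<le> j)"

definition predictive_theory :: "('a::finite) fml set \<Rightarrow> bool" where
  "predictive_theory \<Sigma> \<longleftrightarrow> (\<forall>f\<in>\<Sigma>. predictive f)"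

inductive derivable :: "('a::finite) fml set \<Rightarrow> 'a fml \<Rightarrow> bool" for \<Sigma> where
  Hyp: "f \<in> \<Sigma> \<Longrightarrow> derivable \<Sigma> f"
| Ax: "finite A \<Longrightarrow> finite B \<Longrightarrow> derivable \<Sigma> (A \<union> B, A)"
| Cut: "finite A \<Longrightarrow> finite B \<Longrightarrow> finite C \<Longrightarrow> finite D \<Longrightarrow>
        derivable \<Sigma> (A, B) \<Longrightarrow> derivable \<Sigma> (B \<union> C, D) \<Longrightarrow> derivable \<Sigma> (A \<union> C, D)"
| Shf: "finite A \<Longrightarrow> finite B \<Longrightarrow> derivable \<Sigma> (A, B) \<Longrightarrow> derivable \<Sigma> (shift A i, shift B i)"

text \<open>Procedure PseudoLinClosure(\<Sigma>, A, Max), modelled as a nondeterministic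
  small-step transition system.  The pairs \<langle>E \<Rightarrow> F, i\<rangle> created during
  initialisation form the set plc_idx; list[z] is plc_list z.  The field
  pend holds the not-yet-processed part of list[y^i] for the element y^i
  currently being processed (the inner for-loop, in arbitrary order).\<close>

definition plc_idx :: "('a::finite) fml set \<Rightarrow> 'a tattr set \<Rightarrow> int \<Rightarrow> ('a fml \<times> int) set" where
  "plc_idx \<Sigma> A Mx = {((E, F), i). (E, F) \<in> \<Sigma> \<and> lo A - lo E \<le> i \<and> i \<le> Mx - lo F}"

definition plc_list :: "('a::finite) fml set \<Rightarrow> 'a tattr set \<Rightarrow> int \<Rightarrow> 'a tattr \<Rightarrow> ('a fml \<times> int) set" where
  "plc_list \<Sigma> A Mx z = {p \<in> plc_idx \<Sigma> A Mx. z \<in> shift (fst (fst p)) (snd p)}"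

record 'a plc_state =
  stM :: "'a tattr set"
  stUpd :: "'a tattr set"
  stCnt :: "'a fml \<times> int \<Rightarrow> int"
  stPend :: "('a fml \<times> int) set"

definition plc_init :: "'a tattr set \<Rightarrow> ('a::finite) plc_state" where
  "plc_init A = \<lparr> stM = A, stUpd = A, stCnt = (\<lambda>((E, F), i). int (card E)), stPend = {} \<rparr>"

inductive plc_step :: "('a::finite) fml set \<Rightarrow> 'a tattr set \<Rightarrow> int \<Rightarrow> 'a plc_state \<Rightarrow> 'a plc_state \<Rightarrow> bool"
  for \<Sigma> A Mx where
  pick: "stPend s = {} \<Longrightarrow> y \<in> stUpd s \<Longrightarrow>
     plc_step \<Sigma> A Mx s (s\<lparr> stUpd := stUpd s - {y}, stPend := plc_list \<Sigma> A Mx y \<rparr>)"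
| dec_nonzero: "p \<in> stPend s \<Longrightarrow> stCnt s p - 1 \<noteq> 0 \<Longrightarrow>
     plc_step \<Sigma> A Mx s (s\<lparr> stCnt := (stCnt s)(p := stCnt s p - 1), stPend := stPend s - {p} \<rparr>)"
| dec_zero: "p \<in> stPend s \<Longrightarrow> stCnt s p - 1 = 0 \<Longrightarrow> p = ((E, F), j) \<Longrightarrow>
     new = shift F j - stM s \<Longrightarrow>
     plc_step \<Sigma> A Mx s (s\<lparr> stM := stM s \<union> new, stUpd := stUpd s \<union> new,
        stCnt := (stCnt s)(p := stCnt s p - 1), stPend := stPend s - {p} \<rparr>)"

definition plc_final :: "'a plc_state \<Rightarrow> bool" where
  "plc_final s \<longleftrightarrow> stPend s = {} \<and> stUpd s = {}"

end

theory Submission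
  imports Defs
begin

lemma mem_shift: "(y, i) \<in> shift M j \<longleftrightarrow> (y, i - j) \<in> M"
  unfolding shift_def by (force simp: image_iff)

lemma mem_shift': "x \<in> shift M j \<longleftrightarrow> (fst x, snd x - j) \<in> M"
  using mem_shift[of "fst x" "snd x"] by simp

lemma shift_0[simp]: "shift M 0 = M"
  by (auto simp: mem_shift')

lemma shift_shift: "shift (shift M i) j = shift M (i + j)"
  by (auto simp: mem_shift' algebra_simps)

lemma shift_union: "shift (X \<union> Y) j = shift X j \<union> shift Y j"
  unfolding shift_def by auto

lemma inj_shiftf: "inj_on (\<lambda>(y::'a, i::int). (y, i + j)) M"
  by (auto simp: inj_on_def)

lemma finite_shift[simp]: "finite (shift M j) \<longleftrightarrow> finite M"
  unfolding shift_def using finite_image_iff[OF inj_shiftf] by blast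

lemma card_shift[simp]: "card (shift M j) = card M"
  unfolding shift_def using card_image[OF inj_shiftf] by blast

definition sat :: "'a tattr set \<Rightarrow> 'a fml \<Rightarrow> bool" where
  "sat T f \<longleftrightarrow> (\<forall>k. shift (fst f) k \<subseteq> T \<longrightarrow> shift (snd f) k \<subseteq> T)"

lemma derivable_sat:
  assumes "derivable \<Sigma> f" "\<forall>g\<in>\<Sigma>. sat T g" shows "sat T f"
  using assms(1)
proof induction
  case (Hyp f) then show ?case using assms(2) by blast
next
  case (Ax A B) then show ?case by (auto simp: sat_def shift_union)
next
  case (Cut A B C D)
  show ?case unfolding sat_def fst_conv snd_conv
  proof (intro allI impI)
    fix k assume h: "shift (A \<union> C) k \<subseteq> T"
    hence "shift B k \<subseteq> T" using Cut.IH(1) by (auto simp: sat_def shift_union)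
    hence "shift (B \<union> C) k \<subseteq> T" using h by (auto simp: shift_union)
    thus "shift D k \<subseteq> T" using Cut.IH(2) by (auto simp: sat_def)
  qed
next
  case (Shf A B i) then show ?case by (auto simp: sat_def shift_shift)
qed

lemma der_weaken: assumes "derivable \<Sigma> (A, X)" "finite A" "finite X" "Y \<subseteq> X"
  shows "derivable \<Sigma> (A, Y)"
proof -
  have fY: "finite Y" using assms finite_subset by blast
  have "derivable \<Sigma> (Y \<union> X, Y)" using Ax[OF fY assms(3)] .
  hence "derivable \<Sigma> (X \<union> {}, Y)" using assms(4) by (simp add: sup.absorb2)
  from Cut[OF assms(2) assms(3) finite.emptyI fY assms(1) this] show ?thesis by simp
qed

lemma der_union: assumes "derivable \<Sigma> (A, X)" "derivable \<Sigma> (A, Y)" "finite A" "finite X" "finite Y"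
  shows "derivable \<Sigma> (A, X \<union> Y)"
proof -
  have "derivable \<Sigma> ((X \<union> Y) \<union> {}, X \<union> Y)" using Ax[of "X \<union> Y" "{}"] assms by simp
  hence 1: "derivable \<Sigma> (Y \<union> X, X \<union> Y)" by (simp add: Un_commute)
  have "derivable \<Sigma> (A \<union> X, X \<union> Y)" using Cut[OF assms(3) assms(5) assms(4) _ assms(2) 1] assms by simp
  hence "derivable \<Sigma> (X \<union> A, X \<union> Y)" by (simp add: Un_commute)
  from Cut[OF assms(3) assms(4) assms(3) _ assms(1) this] assms show ?thesis by simp
qed

lemma lo_le: "finite X \<Longrightarrow> x \<in> X \<Longrightarrow> lo X \<le> snd x"
  unfolding lo_def by (simp add: Min_le)
lemma up_ge: "finite X \<Longrightarrow> x \<in> X \<Longrightarrow> snd x \<le> up X"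
  unfolding up_def by (simp add: Max_ge)
lemma lo_in: "finite X \<Longrightarrow> X \<noteq> {} \<Longrightarrow> \<exists>x\<in>X. snd x = lo X"
  unfolding lo_def by (metis (mono_tags) Min_in finite_imageI image_iff image_is_empty)

lemma card_int_insert: "finite S \<Longrightarrow> y \<notin> V \<Longrightarrow>
   int (card (S \<inter> insert y V)) = int (card (S \<inter> V)) + (if y \<in> S then 1 else 0)"
proof (cases "y \<in> S")
  case True
  assume "finite S" "y \<notin> V"
  hence "S \<inter> insert y V = insert y (S \<inter> V)" "y \<notin> S \<inter> V" "finite (S \<inter> V)" using True by auto
  thus ?thesis using True by simp
next
  case False thus ?thesis by (simp add: Int_insert_right)
qed

locale plc_loc =
  fixes \<Sigma> :: "('a::finite) fml set" and A B :: "'a tattr set"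
  assumes finS: "finite \<Sigma>" and predS: "predictive_theory \<Sigma>" and predAB: "predictive (A, B)"
begin

abbreviation "idx \<equiv> plc_idx \<Sigma> A (up B)"
abbreviation "step \<equiv> plc_step \<Sigma> A (up B)"

lemma finA: "finite A" and finB: "finite B" and neA: "A \<noteq> {}" and neB: "B \<noteq> {}"
  using predAB by (auto simp: predictive_def is_formula_def)

lemma predAB_le: "a \<in> A \<Longrightarrow> b \<in> B \<Longrightarrow> snd a \<le> snd b"
  using predAB unfolding predictive_def by (metis fst_conv prod.collapse snd_conv)

lemma predEF: assumes "(E, F) \<in> \<Sigma>"
  shows "finite E" "finite F" "E \<noteq> {}" "F \<noteq> {}" "\<And>e f. e \<in> E \<Longrightarrow> f \<in> F \<Longrightarrow> snd e \<le> snd f"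
proof -
  have p: "predictive (E, F)" using assms predS unfolding predictive_theory_def by blast
  thus "finite E" "finite F" "E \<noteq> {}" "F \<noteq> {}" unfolding predictive_def is_formula_def by auto
  fix e f assume "e \<in> E" "f \<in> F"
  thus "snd e \<le> snd f" using p unfolding predictive_def by (metis fst_conv prod.collapse snd_conv)
qed

lemma idx_D: "p \<in> idx \<Longrightarrow> fst p \<in> \<Sigma> \<and> lo A - lo (fst (fst p)) \<le> snd p \<and> snd p \<le> up B - lo (snd (fst p))"
  by (cases p) (auto simp: plc_idx_def)

lemma idx_I: "(E, F) \<in> \<Sigma> \<Longrightarrow> lo A - lo E \<le> j \<Longrightarrow> j \<le> up B - lo F \<Longrightarrow> ((E, F), j) \<in> idx"
  by (auto simp: plc_idx_def)

lemma fin_idx: "finite idx"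
proof (rule finite_subset)
  show "idx \<subseteq> (\<Union>f\<in>\<Sigma>. {f} \<times> {lo A - lo (fst f) .. up B - lo (snd f)})"
    using idx_D by fastforce
  show "finite (\<Union>f\<in>\<Sigma>. {f} \<times> {lo A - lo (fst f) .. up B - lo (snd f)})"
    using finS by auto
qed

lemma idx_fin: "p \<in> idx \<Longrightarrow> finite (fst (fst p)) \<and> finite (snd (fst p)) \<and> fst (fst p) \<noteq> {}"
  using idx_D predEF by (metis prod.collapse)

definition Bnd where "Bnd = A \<union> (\<Union>p\<in>idx. shift (snd (fst p)) (snd p))"

lemma fin_Bnd: "finite Bnd"
  unfolding Bnd_def using fin_idx finA idx_fin by auto

definition Inv :: "'a plc_state \<Rightarrow> bool" where
  "Inv s \<longleftrightarrow> A \<subseteq> stM s \<and> stUpd s \<subseteq> stM s \<and> stM s \<subseteq> Bnd \<and> stPend s \<subseteq> idx \<and>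
    (\<forall>p\<in>idx. stCnt s p = int (card (fst (fst p)))
        - int (card (shift (fst (fst p)) (snd p) \<inter> (stM s - stUpd s)))
        + (if p \<in> stPend s then 1 else 0)) \<and>
    (\<forall>p\<in>idx. stCnt s p = 0 \<longrightarrow> shift (snd (fst p)) (snd p) \<subseteq> stM s) \<and>
    derivable \<Sigma> (A, stM s)"

lemma Inv_init: "Inv (plc_init A)"
proof -
  have "derivable \<Sigma> (A \<union> {}, A)" using Ax[of A "{}"] finA by simp
  moreover have "\<forall>p\<in>idx. stCnt (plc_init A) p = int (card (fst (fst p)))"
    by (auto simp: plc_init_def split: prod.split)
  moreover have "\<forall>p\<in>idx. card (fst (fst p)) \<noteq> 0" using idx_fin by auto
  ultimately show ?thesis unfolding Inv_def by (auto simp: plc_init_def Bnd_def)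
qed


lemma InvD: assumes "Inv s"
  shows "A \<subseteq> stM s" "stUpd s \<subseteq> stM s" "stM s \<subseteq> Bnd" "stPend s \<subseteq> idx"
   "\<And>p. p \<in> idx \<Longrightarrow> stCnt s p = int (card (fst (fst p)))
        - int (card (shift (fst (fst p)) (snd p) \<inter> (stM s - stUpd s)))
        + (if p \<in> stPend s then 1 else 0)"
   "\<And>p. p \<in> idx \<Longrightarrow> stCnt s p = 0 \<Longrightarrow> shift (snd (fst p)) (snd p) \<subseteq> stM s"
   "derivable \<Sigma> (A, stM s)"
  using assms unfolding Inv_def by blast+

lemma Inv_step: assumes I: "Inv s" and st: "step s s'" shows "Inv s'"
  using st
proof cases
  case (pick y)
  have M: "stM s' = stM s" and U: "stUpd s' = stUpd s - {y}" and P: "stPend s' = plc_list \<Sigma> A (up B) y"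
    and C: "stCnt s' = stCnt s"
    using pick by auto
  have yM: "y \<in> stM s" using InvD(2)[OF I] pick by blast
  have V: "stM s' - stUpd s' = insert y (stM s - stUpd s)" using yM M U pick by blast
  have yV: "y \<notin> stM s - stUpd s" using pick by blast
  have cnt: "stCnt s' p = int (card (fst (fst p))) - int (card (shift (fst (fst p)) (snd p) \<inter> (stM s' - stUpd s'))) + (if p \<in> stPend s' then 1 else 0)" if p: "p \<in> idx" for p
  proof -
    have fS: "finite (shift (fst (fst p)) (snd p))" using idx_fin p by simp
    have "int (card (shift (fst (fst p)) (snd p) \<inter> (stM s' - stUpd s'))) = int (card (shift (fst (fst p)) (snd p) \<inter> (stM s - stUpd s))) + (if y \<in> shift (fst (fst p)) (snd p) then 1 else 0)"
      unfolding V by (rule card_int_insert[OF fS yV])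
    moreover have "(p \<in> stPend s') = (y \<in> shift (fst (fst p)) (snd p))" using P p unfolding plc_list_def by auto
    moreover have "stCnt s p = int (card (fst (fst p))) - int (card (shift (fst (fst p)) (snd p) \<inter> (stM s - stUpd s)))"
      using InvD(5)[OF I p] pick(2) by simp
    ultimately show ?thesis using C by simp
  qed
  have "stPend s' \<subseteq> idx" using P unfolding plc_list_def by auto
  moreover have "\<forall>p\<in>idx. stCnt s' p = 0 \<longrightarrow> shift (snd (fst p)) (snd p) \<subseteq> stM s'"
    using InvD(6)[OF I] C M by simp
  ultimately show ?thesis unfolding Inv_def using InvD[OF I] cnt M U by auto
next
  case (dec_nonzero p)
  have pI: "p \<in> idx" using InvD(4)[OF I] dec_nonzero by blast
  have M: "stM s' = stM s" and U: "stUpd s' = stUpd s" and P: "stPend s' = stPend s - {p}"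
    and C: "stCnt s' = (stCnt s)(p := stCnt s p - 1)"
    using dec_nonzero by auto
  have cnt: "stCnt s' q = int (card (fst (fst q))) - int (card (shift (fst (fst q)) (snd q) \<inter> (stM s' - stUpd s'))) + (if q \<in> stPend s' then 1 else 0)" if q: "q \<in> idx" for q
    using InvD(5)[OF I q] dec_nonzero(2) M U P C by (cases "q = p") auto
  have z: "\<forall>q\<in>idx. stCnt s' q = 0 \<longrightarrow> shift (snd (fst q)) (snd q) \<subseteq> stM s'"
    using InvD(6)[OF I] C M dec_nonzero(3) by auto
  show ?thesis unfolding Inv_def using InvD[OF I] cnt z M U P by auto
next
  case (dec_zero p E F j new)
  have pI: "p \<in> idx" using InvD(4)[OF I] dec_zero by blast
  have M: "stM s' = stM s \<union> new" and U: "stUpd s' = stUpd s \<union> new" and P: "stPend s' = stPend s - {p}"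
    and C: "stCnt s' = (stCnt s)(p := stCnt s p - 1)"
    using dec_zero by auto
  have EF: "(E, F) \<in> \<Sigma>" using idx_D[OF pI] dec_zero by simp
  note fe = predEF[OF EF]
  let ?V = "stM s - stUpd s"
  have finM: "finite (stM s)" using InvD(3)[OF I] fin_Bnd by (meson finite_subset)
  have "stCnt s p = int (card E) - int (card (shift E j \<inter> ?V)) + 1"
    using InvD(5)[OF I pI] dec_zero by simp
  hence "card (shift E j) \<le> card (shift E j \<inter> ?V)" using dec_zero by simp
  hence "shift E j \<inter> ?V = shift E j" using card_seteq[of "shift E j" "shift E j \<inter> ?V"] fe by auto
  hence EM: "shift E j \<subseteq> stM s" by blast
  have d0: "derivable \<Sigma> (A, stM s)" using InvD(7)[OF I] .
  have d1: "derivable \<Sigma> (A, shift E j)" using der_weaken[OF d0 finA finM EM] .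
  have d2: "derivable \<Sigma> (shift E j \<union> {}, shift F j)" using Shf[OF fe(1) fe(2) Hyp[OF EF]] by simp
  have "derivable \<Sigma> (A \<union> {}, shift F j)" using Cut[OF finA _ finite.emptyI _ d1 d2] fe by simp
  hence "derivable \<Sigma> (A, stM s \<union> shift F j)" using der_union[OF d0 _ finA finM] fe by simp
  moreover have MF: "stM s \<union> new = stM s \<union> shift F j" using dec_zero by blast
  ultimately have der: "derivable \<Sigma> (A, stM s')" using M by simp
  have V: "stM s' - stUpd s' = ?V" using dec_zero M U by blast
  have Bd: "stM s' \<subseteq> Bnd" using pI dec_zero InvD(3)[OF I] M unfolding Bnd_def by force
  have cnt: "stCnt s' q = int (card (fst (fst q))) - int (card (shift (fst (fst q)) (snd q) \<inter> (stM s' - stUpd s'))) + (if q \<in> stPend s' then 1 else 0)" if q: "q \<in> idx" for q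
    unfolding V using InvD(5)[OF I q] dec_zero(2) P C by (cases "q = p") auto
  have z: "\<forall>q\<in>idx. stCnt s' q = 0 \<longrightarrow> shift (snd (fst q)) (snd q) \<subseteq> stM s'"
    using InvD(6)[OF I] C M MF dec_zero(4) by auto
  show ?thesis unfolding Inv_def using InvD[OF I] cnt z M U P der Bd by auto
qed

definition mu1 :: "'a plc_state \<Rightarrow> nat" where "mu1 s = card (Bnd - stM s)"
definition mu2 :: "'a plc_state \<Rightarrow> nat" where "mu2 s = card (stUpd s)"
definition mu3 :: "'a plc_state \<Rightarrow> nat" where "mu3 s = card (stPend s)"

lemma step_dec: assumes I: "Inv s" and st: "step s s'" shows "(s', s) \<in> measures [mu1, mu2, mu3]"
proof -
  have finM: "finite (stM s)" using I fin_Bnd unfolding Inv_def by (meson finite_subset)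
  have finU: "finite (stUpd s)" using I finM unfolding Inv_def by (meson finite_subset)
  have finP: "finite (stPend s)" using I fin_idx unfolding Inv_def by (meson finite_subset)
  show ?thesis using st
  proof cases
    case (pick y)
    thus ?thesis using finU card_Diff1_less[OF finU, of y] by (simp add: mu1_def mu2_def)
  next
    case (dec_nonzero p)
    thus ?thesis using finP card_Diff1_less[OF finP, of p] by (simp add: mu1_def mu2_def mu3_def)
  next
    case (dec_zero p E F j new)
    show ?thesis
    proof (cases "new = {}")
      case True
      have "stM s' = stM s" "stUpd s' = stUpd s" "stPend s' = stPend s - {p}" using dec_zero True by auto
      thus ?thesis using dec_zero finP card_Diff1_less[OF finP, of p] by (simp add: mu1_def mu2_def mu3_def)
    next
      case False
      have pI: "p \<in> idx" using I dec_zero unfolding Inv_def by blast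
      have "new \<subseteq> Bnd" using pI dec_zero unfolding Bnd_def by force
      hence "Bnd - (stM s \<union> new) \<subset> Bnd - stM s" using False dec_zero by blast
      hence "card (Bnd - (stM s \<union> new)) < card (Bnd - stM s)"
        using psubset_card_mono fin_Bnd by blast
      thus ?thesis using dec_zero by (simp add: mu1_def)
    qed
  qed
qed

lemma progress: assumes I: "Inv s" and nf: "\<not> plc_final s" shows "\<exists>s'. step s s'"
proof (cases "stPend s = {}")
  case True
  then obtain y where "y \<in> stUpd s" using nf unfolding plc_final_def by blast
  thus ?thesis using plc_step.pick[OF True] by blast
next
  case False
  then obtain p where pin: "p \<in> stPend s" by blast
  obtain E F j where pe: "p = ((E, F), j)" by (metis prod.collapse)
  show ?thesis
  proof (cases "stCnt s p - 1 = 0")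
    case True
    show ?thesis using plc_step.dec_zero[OF pin True pe refl] by blast
  next
    case False
    show ?thesis using plc_step.dec_nonzero[OF pin False] by blast
  qed
qed

lemma reach_final: assumes "Inv s" shows "\<exists>s'. step\<^sup>*\<^sup>* s s' \<and> plc_final s'"
  using wf_measures[of "[mu1, mu2, mu3]"] assms
proof (induction s rule: wf_induct_rule)
  case (less s)
  show ?case
  proof (cases "plc_final s")
    case True thus ?thesis by blast
  next
    case False
    then obtain s' where st: "step s s'" using progress less.prems by blast
    have "Inv s'" using Inv_step less.prems st by blast
    moreover have "(s', s) \<in> measures [mu1,mu2,mu3]" using step_dec less.prems st by blast
    ultimately obtain t where "step\<^sup>*\<^sup>* s' t" "plc_final t" using less.IH by blast
    thus ?thesis using st by (meson converse_rtranclp_into_rtranclp)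
  qed
qed

lemma complete: assumes I: "Inv s" and fin: "plc_final s" and d: "derivable \<Sigma> (A, B)"
  shows "B \<subseteq> stM s"
proof -
  let ?M = "stM s"
  have U: "stUpd s = {}" and P: "stPend s = {}" using fin by (auto simp: plc_final_def)
  have AM: "A \<subseteq> ?M" using I unfolding Inv_def by blast
  have clos: "shift F j \<subseteq> ?M" if "(E,F) \<in> \<Sigma>" "lo A - lo E \<le> j" "j \<le> up B - lo F" "shift E j \<subseteq> ?M" for E F j
  proof -
    have p: "((E,F),j) \<in> idx" using idx_I that by blast
    have "stCnt s ((E,F),j) = int (card E) - int (card (shift E j \<inter> ?M))"
      using InvD(5)[OF I p] U P by simp
    also have "shift E j \<inter> ?M = shift E j" using that(4) by blast
    finally have "stCnt s ((E,F),j) = 0" by simp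
    thus ?thesis using InvD(6)[OF I p] by simp
  qed
  have lowM: "lo A \<le> snd x" if "x \<in> ?M" for x
  proof -
    have "x \<in> Bnd" using I that unfolding Inv_def by blast
    then consider "x \<in> A" | p where "p \<in> idx" "x \<in> shift (snd (fst p)) (snd p)" unfolding Bnd_def by blast
    thus ?thesis
    proof cases
      case 1 thus ?thesis using lo_le finA by blast
    next
      case 2
      obtain E F j where pe: "p = ((E,F),j)" by (metis prod.collapse)
      have EF: "(E,F) \<in> \<Sigma>" and j: "lo A - lo E \<le> j" using idx_D[OF 2(1)] pe by auto
      obtain e where e: "e \<in> E" "snd e = lo E" using lo_in predEF[OF EF] by blast
      have "(fst x, snd x - j) \<in> F" using 2(2) pe by (simp add: mem_shift')
      hence "snd e \<le> snd x - j" using predEF(5)[OF EF e(1)] by fastforce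
      thus ?thesis using e j by simp
    qed
  qed
  define T where "T = ?M \<union> {x. up B < snd x}"
  have satT: "\<forall>g\<in>\<Sigma>. sat T g"
  proof
    fix g assume g: "g \<in> \<Sigma>"
    obtain E F where gEF: "g = (E,F)" by (cases g)
    have EF: "(E,F) \<in> \<Sigma>" using g gEF by simp
    show "sat T g" unfolding sat_def gEF fst_conv snd_conv
    proof (intro allI impI)
      fix k assume Ek: "shift E k \<subseteq> T"
      show "shift F k \<subseteq> T"
      proof (cases "up B < lo F + k")
        case True
        show ?thesis
        proof
          fix x assume "x \<in> shift F k"
          hence "(fst x, snd x - k) \<in> F" by (simp add: mem_shift')
          hence "lo F \<le> snd x - k" using lo_le[OF predEF(2)[OF EF]] by fastforce
          thus "x \<in> T" using True unfolding T_def by simp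
        qed
      next
        case False
        obtain f0 where f0: "f0 \<in> F" "snd f0 = lo F" using lo_in predEF[OF EF] by blast
        have EM: "shift E k \<subseteq> ?M"
        proof
          fix x assume xs: "x \<in> shift E k"
          hence "(fst x, snd x - k) \<in> E" by (simp add: mem_shift')
          hence "snd x - k \<le> lo F" using predEF(5)[OF EF _ f0(1)] f0(2) by fastforce
          hence "\<not> up B < snd x" using False by simp
          thus "x \<in> ?M" using xs Ek unfolding T_def by blast
        qed
        obtain e where e: "e \<in> E" "snd e = lo E" using lo_in predEF[OF EF] by blast
        have "(fst e, snd e + k) \<in> shift E k" using e(1) by (simp add: mem_shift)
        hence "lo A \<le> snd e + k" using EM lowM by fastforce
        hence k1: "lo A - lo E \<le> k" using e(2) by simp
        have k2: "k \<le> up B - lo F" using False by simp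
        have "shift F k \<subseteq> ?M" using clos[OF EF k1 k2 EM] .
        thus ?thesis unfolding T_def by blast
      qed
    qed
  qed
  have "sat T (A, B)" using derivable_sat[OF d satT] .
  moreover have "shift A 0 \<subseteq> T" using AM unfolding T_def by auto
  ultimately have BT: "B \<subseteq> T" unfolding sat_def by (metis fst_conv snd_conv shift_0)
  show ?thesis
  proof
    fix b assume "b \<in> B"
    thus "b \<in> ?M" using BT up_ge[OF finB] unfolding T_def by fastforce
  qed
qed

lemma sound: assumes I: "Inv s" and "B \<subseteq> stM s" shows "derivable \<Sigma> (A, B)"
proof -
  have finM: "finite (stM s)" using I fin_Bnd unfolding Inv_def by (meson finite_subset)
  show ?thesis using der_weaken[OF _ finA finM assms(2)] I unfolding Inv_def by blast
qed

end

theorem theorem16: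
  fixes \<Sigma> :: "('a::finite) fml set" and A B :: "'a tattr set"
  assumes "finite \<Sigma>" and "predictive_theory \<Sigma>" and "predictive (A, B)"
  shows "(\<not> (\<exists>r. r 0 = plc_init A \<and> (\<forall>n. plc_step \<Sigma> A (up B) (r n) (r (Suc n))))) \<and>
         (\<exists>s. (plc_step \<Sigma> A (up B))\<^sup>*\<^sup>* (plc_init A) s \<and> plc_final s) \<and>
         (\<forall>s. (plc_step \<Sigma> A (up B))\<^sup>*\<^sup>* (plc_init A) s \<and> plc_final s \<longrightarrow>
           (derivable \<Sigma> (A, B) \<longleftrightarrow> B \<subseteq> stM s))"
proof -
  interpret plc_loc \<Sigma> A B using assms by unfold_locales
  have R: "Inv s" if "(plc_step \<Sigma> A (up B))\<^sup>*\<^sup>* (plc_init A) s" for s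
    using that by (induction rule: rtranclp_induct) (auto intro: Inv_init Inv_step)
  have part1: "\<not> (\<exists>r. r 0 = plc_init A \<and> (\<forall>n. plc_step \<Sigma> A (up B) (r n) (r (Suc n))))"
  proof
    assume "\<exists>r. r 0 = plc_init A \<and> (\<forall>n. plc_step \<Sigma> A (up B) (r n) (r (Suc n)))"
    then obtain r where r0: "r 0 = plc_init A" and rs: "\<And>n. plc_step \<Sigma> A (up B) (r n) (r (Suc n))" by blast
    have Ir: "Inv (r n)" for n
      by (induction n) (use r0 rs Inv_init Inv_step in auto)
    have "(r (Suc n), r n) \<in> measures [mu1,mu2,mu3]" for n using step_dec Ir rs by blast
    thus False using wf_measures[of "[mu1,mu2,mu3]"] unfolding wf_iff_no_infinite_down_chain by blast
  qed
  have part2: "\<exists>s. (plc_step \<Sigma> A (up B))\<^sup>*\<^sup>* (plc_init A) s \<and> plc_final s"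
    using reach_final[OF Inv_init] .
  show ?thesis using part1 part2 R complete sound by blast
qed

end
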